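(* Let $\theta>\kappa>0$ and $\eta_t=1/(\kappa t+2\theta)$. Let $p\in\mathcal X$ be fixed. Let $(\pi^t)_{t\ge0}$ be $\mathcal X$-valued random variables adapted to a filtration $(\mathcal F_t)_{t\ge0}$, i.e. $\pi^t$ is $\mathcal F_t$-measurable. Let $\xi_i^t\in\mathbb R^{d_i}$ be random vectors with $\mathbb E[\xi_i^t\mid\mathcal F_t]=0$ and $\mathbb E[\|\xi_i^t\|^2\mid\mathcal F_t]\le C^2$ for all $i\in[N]$ and $t\ge0$. Suppose that for all $t\ge0$, almost surely, $$D_\psi(p,\pi^{t+1})-D_\psi(p,\pi^t)+D_\psi(\pi^{t+1},\pi^t)\le\eta_t\big(\theta D_\psi(\pi^{t+1},\pi^t)-\kappa D_\psi(p,\pi^t)\big)+\eta_t\sum_{i=1}^N\langle\xi_i^t,\pi_i^{t+1}-p_i\rangle.$$ Then for all $t\ge0$, $$\mathbb E[D_\psi(p,\pi^{t+1})]\le\frac{2\theta-\kappa}{\kappa t+2\theta}D_\psi(p,\pi^0)+\frac{NC^2}{\rho(\kappa t+2\theta)}\Big(\frac1\kappa\log\Big(\frac\kappa{2\theta}t+1\Big)+\frac1{2\theta}\Big).$$ (In the paper, $p=\pi^{\mu,\sigma}$.)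
   Context: For each $i\in[N]$, $\mathcal X_i\subseteq\mathbb R^{d_i}$ is a nonempty compact convex set, and $\mathcal X=\prod_i\mathcal X_i$. The norm is Euclidean, with $\|\pi\|^2=\sum_i\|\pi_i\|^2$. Regularizer. $\psi:\mathcal X_i\to\mathbb R$ is differentiable and $\rho$-strongly convex with respect to $\|\cdot\|$ ($\rho>0$). Bregman divergence: $D_\psi(x,y)=\psi(x)-\psi(y)-\langle\nabla\psi(y),x-y\rangle$, and $D_\psi(\pi,\pi')=\sum_iD_\psi(\pi_i,\pi_i')$. Here $\pi^0$ is deterministic. *)

theory Defs
  imports "HOL-Probability.Probability"
begin

definition bregman :: "('a::real_inner \<Rightarrow> real) \<Rightarrow> ('a \<Rightarrow> 'a) \<Rightarrow> 'a \<Rightarrow> 'a \<Rightarrow> real" where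
  "bregman psi g x y = psi x - psi y - inner (g y) (x - y)"

definition bregman_prod ::
  "nat \<Rightarrow> (nat \<Rightarrow> 'a::real_inner \<Rightarrow> real) \<Rightarrow> (nat \<Rightarrow> 'a \<Rightarrow> 'a) \<Rightarrow> (nat \<Rightarrow> 'a) \<Rightarrow> (nat \<Rightarrow> 'a) \<Rightarrow> real" where
  "bregman_prod N psi g x y = (\<Sum>i<N. bregman (psi i) (g i) (x i) (y i))"

definition strongly_convex_on_wrt :: "real \<Rightarrow> 'a::real_normed_vector set \<Rightarrow> ('a \<Rightarrow> real) \<Rightarrow> bool" where
  "strongly_convex_on_wrt rho S f \<longleftrightarrow>
     (\<forall>x\<in>S. \<forall>y\<in>S. \<forall>u::real. 0 \<le> u \<and> u \<le> 1 \<longrightarrow>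
        f (u *\<^sub>R x + (1 - u) *\<^sub>R y) \<le> u * f x + (1 - u) * f y - rho / 2 * u * (1 - u) * (norm (x - y))\<^sup>2)"

end

theory Submission
  imports Defs
begin

lemma bregman_strong:
  fixes f :: "'a::real_inner \<Rightarrow> real" and S :: "'a set"
  assumes S: "convex S" and x: "x \<in> S" and y: "y \<in> S"
    and der: "(f has_derivative (\<lambda>h. inner G h)) (at y within S)"
    and sc: "strongly_convex_on_wrt rho S f"
  shows "rho / 2 * (norm (x - y))\<^sup>2 \<le> f x - f y - inner G (x - y)"
proof -
  define d where "d = x - y"
  define q where "q = (\<lambda>u::real. f (y + u *\<^sub>R d))"
  have lin: "((\<lambda>u::real. y + u *\<^sub>R d) has_derivative (\<lambda>u. u *\<^sub>R d)) (at 0 within {0..1})"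
    by (auto intro!: derivative_eq_intros)
  have img: "(\<lambda>u::real. y + u *\<^sub>R d) ` {0..1} \<subseteq> S"
  proof
    fix z assume "z \<in> (\<lambda>u::real. y + u *\<^sub>R d) ` {0..1}"
    then obtain u where u: "0 \<le> u" "u \<le> 1" "z = y + u *\<^sub>R d" by auto
    have "z = u *\<^sub>R x + (1 - u) *\<^sub>R y" using u by (simp add: d_def algebra_simps)
    then show "z \<in> S" using S x y u by (simp add: convex_def)
  qed
  have der2: "(f has_derivative (\<lambda>h. inner G h)) (at ((\<lambda>u::real. y + u *\<^sub>R d) 0) within ((\<lambda>u::real. y + u *\<^sub>R d) ` {0..1}))"
    using has_derivative_subset[OF der img] by simp
  have "(q has_derivative ((\<lambda>h. inner G h) \<circ> (\<lambda>u. u *\<^sub>R d))) (at 0 within {0..1})"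
    using diff_chain_within[OF lin der2] by (simp add: q_def o_def)
  then have "(q has_derivative (\<lambda>u. u * inner G d)) (at 0 within {0..1})"
    by (simp add: o_def mult.commute)
  then have "(q has_field_derivative inner G d) (at 0 within {0..1})"
    by (simp add: has_field_derivative_def mult.commute[of _ "inner G d"])
  then have lim: "((\<lambda>u. (q u - q 0) / (u - 0)) \<longlongrightarrow> inner G d) (at_right 0)"
    unfolding has_field_derivative_iff at_within_Icc_at_right[OF zero_less_one] .
  have lim2: "((\<lambda>u. f x - f y - rho / 2 * (1 - u) * (norm d)\<^sup>2) \<longlongrightarrow> f x - f y - rho / 2 * (1 - 0) * (norm d)\<^sup>2) (at_right 0)"
    by (intro tendsto_intros)
  have ev: "eventually (\<lambda>u. (q u - q 0) / (u - 0) \<le> f x - f y - rho / 2 * (1 - u) * (norm d)\<^sup>2) (at_right (0::real))"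
    unfolding eventually_at_right_field
  proof (intro exI[of _ 1] conjI allI impI)
    fix u :: real assume u0: "0 < u" and u1: "u < 1"
    note u = u0 u1
    have "f (u *\<^sub>R x + (1 - u) *\<^sub>R y) \<le> u * f x + (1 - u) * f y - rho / 2 * u * (1 - u) * (norm (x - y))\<^sup>2"
      using sc x y u unfolding strongly_convex_on_wrt_def by auto
    moreover have "u *\<^sub>R x + (1 - u) *\<^sub>R y = y + u *\<^sub>R d" by (simp add: d_def algebra_simps)
    ultimately have "q u - q 0 \<le> u * (f x - f y - rho / 2 * (1 - u) * (norm d)\<^sup>2)"
      by (simp add: q_def d_def algebra_simps)
    then show "(q u - q 0) / (u - 0) \<le> f x - f y - rho / 2 * (1 - u) * (norm d)\<^sup>2"
      using u by (simp add: divide_le_eq mult.commute)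
  qed simp
  have "inner G d \<le> f x - f y - rho / 2 * (1 - 0) * (norm d)\<^sup>2"
    by (rule tendsto_le[OF trivial_limit_at_right_real lim2 lim ev])
  then show ?thesis by (simp add: d_def)
qed


lemma young_aux:
  fixes a b e :: real and v w :: "'a::real_inner"
  assumes "rho > 0" "e \<ge> 0"
  shows "e * inner v w - rho / 4 * (norm w)\<^sup>2 \<le> e\<^sup>2 * (norm v)\<^sup>2 / rho"
proof -
  have "e * inner v w \<le> e * (norm v * norm w)"
    using assms(2) norm_cauchy_schwarz[of v w] by (simp add: mult_left_mono)
  moreover have "rho * (e * (norm v * norm w) - rho / 4 * (norm w)\<^sup>2) \<le> e\<^sup>2 * (norm v)\<^sup>2"
  proof -
    have "0 \<le> (e * norm v - rho / 2 * norm w)\<^sup>2" by simp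
    then show ?thesis by (simp add: power2_eq_square algebra_simps)
  qed
  ultimately have "rho * (e * inner v w - rho / 4 * (norm w)\<^sup>2) \<le> e\<^sup>2 * (norm v)\<^sup>2"
    using assms(1) by (smt (verit) mult_left_mono)
  then show ?thesis using assms(1) by (simp add: le_divide_eq mult.commute)
qed

lemma harm_ln:
  fixes kappa theta :: real
  assumes k: "kappa > 0" and th: "theta > kappa"
  shows "(\<Sum>r<Suc t. 1 / (kappa * real r + 2 * theta)) \<le> 1 / kappa * ln (kappa / (2 * theta) * real t + 1) + 1 / (2 * theta)"
proof (induction t)
  case 0 then show ?case by simp
next
  case (Suc t)
  define a where "a = kappa * real t + 2 * theta"
  define b where "b = a + kappa"
  have a: "a > 0" using k th unfolding a_def by (smt (verit) mult_nonneg_nonneg of_nat_0_le_iff)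
  have b: "b > 0" using a k by (simp add: b_def)
  have l1: "ln (kappa / (2 * theta) * real t + 1) = ln a - ln (2 * theta)"
  proof -
    have "kappa / (2 * theta) * real t + 1 = a / (2 * theta)" using th k by (simp add: a_def field_simps)
    then show ?thesis using a th k by (simp add: ln_div)
  qed
  have l2: "ln (kappa / (2 * theta) * real (Suc t) + 1) = ln b - ln (2 * theta)"
  proof -
    have "kappa / (2 * theta) * real (Suc t) + 1 = b / (2 * theta)" using th k by (simp add: a_def b_def field_simps)
    then show ?thesis using b th k by (simp add: ln_div)
  qed
  have "ln (a / b) \<le> a / b - 1" using a b by (intro ln_le_minus_one) simp
  then have "ln a - ln b \<le> a / b - 1" using a b by (simp add: ln_div)
  moreover have "a / b - 1 = - kappa / b" using b by (simp add: b_def field_simps)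
  ultimately have key: "kappa / b \<le> ln b - ln a" by simp
  have "1 / b = (kappa / b) / kappa" using k by simp
  also have "\<dots> \<le> (ln b - ln a) / kappa" using key k by (intro divide_right_mono) auto
  finally have "1 / b \<le> 1 / kappa * (ln b - ln a)" by simp
  moreover have "kappa * real (Suc t) + 2 * theta = b" by (simp add: a_def b_def algebra_simps)
  ultimately have st: "1 / (kappa * real (Suc t) + 2 * theta) \<le> 1 / kappa * (ln b - ln a)" by simp
  have "(\<Sum>r<Suc (Suc t). 1 / (kappa * real r + 2 * theta)) = (\<Sum>r<Suc t. 1 / (kappa * real r + 2 * theta)) + 1 / (kappa * real (Suc t) + 2 * theta)"
    by (rule sum.lessThan_Suc)
  also have "\<dots> \<le> (1 / kappa * ln (kappa / (2 * theta) * real t + 1) + 1 / (2 * theta)) + 1 / kappa * (ln b - ln a)"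
    using Suc st by linarith
  also have "\<dots> = 1 / kappa * (ln (kappa / (2 * theta) * real t + 1) + (ln b - ln a)) + 1 / (2 * theta)"
    by (simp add: algebra_simps)
  also have "ln (kappa / (2 * theta) * real t + 1) + (ln b - ln a) = ln (kappa / (2 * theta) * real (Suc t) + 1)"
    using l1 l2 by simp
  finally show ?case .
qed

lemma recursion_bound:
  fixes kappa theta K D0 :: real and e :: "nat \<Rightarrow> real"
  assumes k: "kappa > 0" and th: "theta > kappa" and K: "K \<ge> 0"
    and e0: "e 0 = D0"
    and es: "\<And>s. e (Suc s) \<le> (1 - kappa / (kappa * real s + 2 * theta)) * e s + K / (kappa * real s + 2 * theta)\<^sup>2"
  shows "e (Suc t) \<le> (2 * theta - kappa) / (kappa * real t + 2 * theta) * D0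
           + K / (kappa * real t + 2 * theta) * (1 / kappa * ln (kappa / (2 * theta) * real t + 1) + 1 / (2 * theta))"
proof -
  have pos: "\<And>s. kappa * real s + 2 * theta > 0" using k th by (smt (verit) mult_nonneg_nonneg of_nat_0_le_iff)
  have main: "(kappa * real s + 2 * theta) * e (Suc s) \<le> (2 * theta - kappa) * D0 + K * (\<Sum>r<Suc s. 1 / (kappa * real r + 2 * theta))" for s
  proof (induction s)
    case 0
    have "e 1 \<le> (1 - kappa / (2 * theta)) * D0 + K / (2 * theta)\<^sup>2" using es[of 0] e0 by simp
    then have "(2 * theta) * e 1 \<le> (2 * theta) * ((1 - kappa / (2 * theta)) * D0 + K / (2 * theta)\<^sup>2)"
      using th k by (intro mult_left_mono) auto
    also have "\<dots> = (2 * theta - kappa) * D0 + K / (2 * theta)" using th k by (simp add: field_simps power2_eq_square)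
    finally show ?case by simp
  next
    case (Suc s)
    define a where "a = kappa * real s + 2 * theta"
    have a: "a > 0" using pos a_def by simp
    have "(a + kappa) * e (Suc (Suc s)) \<le> (a + kappa) * ((1 - kappa / (a + kappa)) * e (Suc s) + K / (a + kappa)\<^sup>2)"
      using es[of "Suc s"] a k by (intro mult_left_mono) (auto simp: a_def algebra_simps)
    also have "\<dots> = a * e (Suc s) + K / (a + kappa)"
    proof -
      have ak: "a + kappa \<noteq> 0" using a k by simp
      have 1: "(a + kappa) * (1 - kappa / (a + kappa)) = a" using ak by (simp add: field_simps)
      have 2: "(a + kappa) * (K / (a + kappa)\<^sup>2) = K / (a + kappa)" using ak by (simp add: power2_eq_square)
      show ?thesis using 1 2 by (simp add: distrib_left)
    qed
    finally have "(a + kappa) * e (Suc (Suc s)) \<le> a * e (Suc s) + K / (a + kappa)" .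
    moreover have "kappa * real (Suc s) + 2 * theta = a + kappa" by (simp add: a_def algebra_simps)
    ultimately show ?case using Suc by (simp add: a_def algebra_simps)
  qed
  have "(kappa * real t + 2 * theta) * e (Suc t) \<le> (2 * theta - kappa) * D0 + K * (1 / kappa * ln (kappa / (2 * theta) * real t + 1) + 1 / (2 * theta))"
    using main[of t] harm_ln[OF k th, of t] K by (meson add_left_mono mult_left_mono order_trans)
  then have "e (Suc t) \<le> ((2 * theta - kappa) * D0 + K * (1 / kappa * ln (kappa / (2 * theta) * real t + 1) + 1 / (2 * theta))) / (kappa * real t + 2 * theta)"
    using pos[of t] by (simp add: le_divide_eq mult.commute)
  also have "\<dots> = (2 * theta - kappa) / (kappa * real t + 2 * theta) * D0
           + K / (kappa * real t + 2 * theta) * (1 / kappa * ln (kappa / (2 * theta) * real t + 1) + 1 / (2 * theta))"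
    by (simp add: add_divide_distrib)
  finally show ?thesis .
qed


lemma sfs_of_prob:
  assumes "prob_space M" "subalgebra M F"
  shows "sigma_finite_subalgebra M F"
proof -
  interpret prob_space M by fact
  have "finite_measure_subalgebra M F"
    unfolding finite_measure_subalgebra_def finite_measure_subalgebra_axioms_def
    using assms(2) finite_measure_axioms by simp
  then show ?thesis by (rule finite_measure_subalgebra_is_sigma_finite)
qed

lemma xi_sq:
  fixes \<xi> :: "'w \<Rightarrow> 'a::euclidean_space"
  assumes M: "prob_space M" and sub: "subalgebra M F"
    and meas: "\<xi> \<in> borel_measurable M"
    and var: "AE \<omega> in M. nn_cond_exp M F (\<lambda>\<omega>. ennreal ((norm (\<xi> \<omega>))\<^sup>2)) \<omega> \<le> ennreal (C\<^sup>2)"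
  shows "integrable M (\<lambda>\<omega>. (norm (\<xi> \<omega>))\<^sup>2)" "(\<integral>\<omega>. (norm (\<xi> \<omega>))\<^sup>2 \<partial>M) \<le> C\<^sup>2"
proof -
  interpret prob_space M by fact
  interpret sigma_finite_subalgebra M F using sfs_of_prob[OF M sub] .
  note meas[measurable]
  have m1[measurable]: "(\<lambda>\<omega>. (norm (\<xi> \<omega>))\<^sup>2) \<in> borel_measurable M" by measurable
  have m2[measurable]: "(\<lambda>\<omega>. ennreal ((norm (\<xi> \<omega>))\<^sup>2)) \<in> borel_measurable M" by measurable
  have "(\<integral>\<^sup>+\<omega>. ennreal ((norm (\<xi> \<omega>))\<^sup>2) \<partial>M) = (\<integral>\<^sup>+\<omega>. 1 * ennreal ((norm (\<xi> \<omega>))\<^sup>2) \<partial>M)" by simp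
  also have "\<dots> = (\<integral>\<^sup>+\<omega>. 1 * nn_cond_exp M F (\<lambda>\<omega>. ennreal ((norm (\<xi> \<omega>))\<^sup>2)) \<omega> \<partial>M)"
    by (rule nn_cond_exp_intg[symmetric, OF _ m2]) simp
  also have "\<dots> \<le> (\<integral>\<^sup>+\<omega>. ennreal (C\<^sup>2) \<partial>M)"
    using var by (intro nn_integral_mono_AE) auto
  also have "\<dots> = ennreal (C\<^sup>2)" by (simp add: emeasure_space_1)
  finally have le: "(\<integral>\<^sup>+\<omega>. ennreal ((norm (\<xi> \<omega>))\<^sup>2) \<partial>M) \<le> ennreal (C\<^sup>2)" .
  show int: "integrable M (\<lambda>\<omega>. (norm (\<xi> \<omega>))\<^sup>2)"
    by (rule integrableI_bounded[OF m1]) (use le in \<open>simp add: order_le_less_trans\<close>)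
  have "ennreal (\<integral>\<omega>. (norm (\<xi> \<omega>))\<^sup>2 \<partial>M) = (\<integral>\<^sup>+\<omega>. ennreal ((norm (\<xi> \<omega>))\<^sup>2) \<partial>M)"
    by (rule nn_integral_eq_integral[symmetric, OF int]) simp
  with le have "ennreal (\<integral>\<omega>. (norm (\<xi> \<omega>))\<^sup>2 \<partial>M) \<le> ennreal (C\<^sup>2)" by simp
  then show "(\<integral>\<omega>. (norm (\<xi> \<omega>))\<^sup>2 \<partial>M) \<le> C\<^sup>2" using ennreal_le_iff[OF zero_le_power2[of C]] by blast
qed

lemma xi_zero:
  fixes \<xi> h :: "'w \<Rightarrow> 'a::euclidean_space"
  assumes M: "prob_space M" and sub: "subalgebra M F"
    and meas: "\<xi> \<in> borel_measurable M"
    and sq: "integrable M (\<lambda>\<omega>. (norm (\<xi> \<omega>))\<^sup>2)"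
    and mean: "\<And>b. b \<in> Basis \<Longrightarrow> AE \<omega> in M. real_cond_exp M F (\<lambda>\<omega>. inner (\<xi> \<omega>) b) \<omega> = 0"
    and hm: "h \<in> borel_measurable F"
    and hb: "\<And>\<omega>. \<omega> \<in> space M \<Longrightarrow> norm (h \<omega>) \<le> K"
  shows "integrable M (\<lambda>\<omega>. inner (\<xi> \<omega>) (h \<omega>))" "(\<integral>\<omega>. inner (\<xi> \<omega>) (h \<omega>) \<partial>M) = 0"
proof -
  interpret prob_space M by fact
  interpret sigma_finite_subalgebra M F using sfs_of_prob[OF M sub] .
  note meas[measurable]
  have K0: "0 \<le> K"
  proof -
    obtain \<omega> where "\<omega> \<in> space M" using not_empty by blast
    then show ?thesis using hb[of \<omega>] norm_ge_zero[of "h \<omega>"] by linarith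
  qed
  note hm[measurable]
  have hM[measurable]: "h \<in> borel_measurable M" by (rule measurable_from_subalg[OF sub hm])
  have int_b: "integrable M (\<lambda>\<omega>. inner (h \<omega>) b * inner (\<xi> \<omega>) b)" if b: "b \<in> Basis" for b
  proof -
    have i1: "integrable M (\<lambda>\<omega>. K * (1 + (norm (\<xi> \<omega>))\<^sup>2))" by (intro integrable_mult_right Bochner_Integration.integrable_add integrable_const sq)
    have i2: "(\<lambda>\<omega>. inner (h \<omega>) b * inner (\<xi> \<omega>) b) \<in> borel_measurable M" by measurable
    have "AE \<omega> in M. norm (inner (h \<omega>) b * inner (\<xi> \<omega>) b) \<le> norm (K * (1 + (norm (\<xi> \<omega>))\<^sup>2))"
    proof (rule AE_I2)
      fix \<omega> assume w: "\<omega> \<in> space M"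
      have nb: "norm b = 1" using b by simp
      have 1: "\<bar>inner (h \<omega>) b\<bar> \<le> K" using Basis_le_norm[OF b, of "h \<omega>"] hb[OF w] by simp
      have 2: "\<bar>inner (\<xi> \<omega>) b\<bar> \<le> 1 + (norm (\<xi> \<omega>))\<^sup>2"
      proof -
        have "\<bar>inner (\<xi> \<omega>) b\<bar> \<le> norm (\<xi> \<omega>)" using Basis_le_norm[OF b] by simp
        moreover have "norm (\<xi> \<omega>) \<le> 1 + (norm (\<xi> \<omega>))\<^sup>2"
        proof -
          have "0 \<le> (norm (\<xi> \<omega>) - 1)\<^sup>2" by simp
          then have "2 * norm (\<xi> \<omega>) \<le> 1 + (norm (\<xi> \<omega>))\<^sup>2" by (simp add: power2_eq_square algebra_simps)
          then show ?thesis using norm_ge_zero[of "\<xi> \<omega>"] by linarith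
        qed
        ultimately show ?thesis by simp
      qed
      have "\<bar>inner (h \<omega>) b * inner (\<xi> \<omega>) b\<bar> \<le> K * (1 + (norm (\<xi> \<omega>))\<^sup>2)"
        unfolding abs_mult by (rule mult_mono[OF 1 2]) (auto simp: K0)
      then show "norm (inner (h \<omega>) b * inner (\<xi> \<omega>) b) \<le> norm (K * (1 + (norm (\<xi> \<omega>))\<^sup>2))" by simp
    qed
    then show ?thesis by (rule Bochner_Integration.integrable_bound[OF i1 i2])
  qed
  have zero_b: "(\<integral>\<omega>. inner (h \<omega>) b * inner (\<xi> \<omega>) b \<partial>M) = 0" if b: "b \<in> Basis" for b
  proof -
    have hbF[measurable]: "(\<lambda>\<omega>. inner (h \<omega>) b) \<in> borel_measurable F" by measurable
    have "(\<integral>\<omega>. inner (h \<omega>) b * inner (\<xi> \<omega>) b \<partial>M) = (\<integral>\<omega>. inner (h \<omega>) b * real_cond_exp M F (\<lambda>\<omega>. inner (\<xi> \<omega>) b) \<omega> \<partial>M)"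
    proof (rule real_cond_exp_intg(2)[symmetric, OF int_b[OF b] hbF])
      show "(\<lambda>\<omega>. inner (\<xi> \<omega>) b) \<in> borel_measurable M" by measurable
    qed
    also have "\<dots> = (\<integral>\<omega>. 0 \<partial>M)"
    proof (rule integral_cong_AE)
      show "(\<lambda>\<omega>. inner (h \<omega>) b * real_cond_exp M F (\<lambda>\<omega>. inner (\<xi> \<omega>) b) \<omega>) \<in> borel_measurable M"
        by measurable
      show "(\<lambda>\<omega>. 0::real) \<in> borel_measurable M" by simp
      show "AE \<omega> in M. inner (h \<omega>) b * real_cond_exp M F (\<lambda>\<omega>. inner (\<xi> \<omega>) b) \<omega> = 0"
        using mean[OF b] by eventually_elim simp
    qed
    finally show ?thesis by simp
  qed
  have eq: "\<And>\<omega>. inner (\<xi> \<omega>) (h \<omega>) = (\<Sum>b\<in>Basis. inner (h \<omega>) b * inner (\<xi> \<omega>) b)"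
  proof -
    fix \<omega>
    have "inner (\<xi> \<omega>) (h \<omega>) = (\<Sum>b\<in>Basis. inner (\<xi> \<omega>) b * inner (h \<omega>) b)" by (rule euclidean_inner)
    also have "\<dots> = (\<Sum>b\<in>Basis. inner (h \<omega>) b * inner (\<xi> \<omega>) b)" by (simp only: mult.commute)
    finally show "inner (\<xi> \<omega>) (h \<omega>) = (\<Sum>b\<in>Basis. inner (h \<omega>) b * inner (\<xi> \<omega>) b)" .
  qed
  show "integrable M (\<lambda>\<omega>. inner (\<xi> \<omega>) (h \<omega>))" unfolding eq by (rule Bochner_Integration.integrable_sum) (rule int_b)
  show "(\<integral>\<omega>. inner (\<xi> \<omega>) (h \<omega>) \<partial>M) = 0" unfolding eq
    by (subst Bochner_Integration.integral_sum) (simp_all add: int_b zero_b)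
qed


primrec Wseq :: "real \<Rightarrow> (nat \<Rightarrow> real) \<Rightarrow> (nat \<Rightarrow> 'w \<Rightarrow> real) \<Rightarrow> nat \<Rightarrow> 'w \<Rightarrow> real" where
  "Wseq d0 c Z 0 = (\<lambda>\<omega>. d0)"
| "Wseq d0 c Z (Suc t) = (\<lambda>\<omega>. c t * Wseq d0 c Z t \<omega> + Z t \<omega>)"

lemma onestep_aux:
  fixes D D' B S1 S2 eta theta kappa A Q :: real
  assumes st: "D' - D + B \<le> eta * (theta * B - kappa * D) + eta * (S1 + S2)"
    and f1: "eta * S1 \<le> A + Q" and f2: "2 * A \<le> B" and f3: "eta * theta \<le> 1/2" and B0: "0 \<le> B"
  shows "D' \<le> (1 - eta * kappa) * D + Q + eta * S2"
proof -
  have "(eta * theta) * B \<le> (1/2) * B" using f3 B0 by (rule mult_right_mono)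
  then show ?thesis using st f1 f2 by (simp add: algebra_simps)
qed

theorem lemma5:
  fixes M :: "'w measure"
    and F :: "nat \<Rightarrow> 'w measure"
    and N :: nat
    and X :: "nat \<Rightarrow> 'a::euclidean_space set"
    and psi :: "nat \<Rightarrow> 'a \<Rightarrow> real"
    and g :: "nat \<Rightarrow> 'a \<Rightarrow> 'a"
    and rho theta kappa C :: real
    and p pi0 :: "nat \<Rightarrow> 'a"
    and \<pi> :: "nat \<Rightarrow> 'w \<Rightarrow> nat \<Rightarrow> 'a"
    and \<xi> :: "nat \<Rightarrow> 'w \<Rightarrow> nat \<Rightarrow> 'a"
  assumes M: "prob_space M"
    and filt: "filtration (space M) F"
    and subalg: "\<And>t. subalgebra M (F t)"
    and X: "\<And>i. i < N \<Longrightarrow> X i \<noteq> {} \<and> compact (X i) \<and> convex (X i)"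
    and rho: "rho > 0"
    and grad: "\<And>i y. i < N \<Longrightarrow> y \<in> X i \<Longrightarrow>
                 (psi i has_derivative (\<lambda>h. inner (g i y) h)) (at y within X i)"
    and sconv: "\<And>i. i < N \<Longrightarrow> strongly_convex_on_wrt rho (X i) (psi i)"
    and kappa: "kappa > 0" and theta: "theta > kappa"
    and p: "\<And>i. i < N \<Longrightarrow> p i \<in> X i"
    and pi_in: "\<And>t \<omega> i. \<omega> \<in> space M \<Longrightarrow> i < N \<Longrightarrow> \<pi> t \<omega> i \<in> X i"
    and pi_adapted: "\<And>t i. i < N \<Longrightarrow> (\<lambda>\<omega>. \<pi> t \<omega> i) \<in> borel_measurable (F t)"
    and pi0: "\<And>\<omega>. \<omega> \<in> space M \<Longrightarrow> \<pi> 0 \<omega> = pi0"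
    and xi_meas: "\<And>t i. i < N \<Longrightarrow> (\<lambda>\<omega>. \<xi> t \<omega> i) \<in> borel_measurable M"
    and xi_mean: "\<And>t i b. i < N \<Longrightarrow> b \<in> Basis \<Longrightarrow>
                   AE \<omega> in M. real_cond_exp M (F t) (\<lambda>\<omega>. inner (\<xi> t \<omega> i) b) \<omega> = 0"
    and xi_var: "\<And>t i. i < N \<Longrightarrow>
                   AE \<omega> in M. nn_cond_exp M (F t) (\<lambda>\<omega>. ennreal ((norm (\<xi> t \<omega> i))\<^sup>2)) \<omega>
                                \<le> ennreal (C\<^sup>2)"
    and step: "\<And>t. AE \<omega> in M.
       bregman_prod N psi g p (\<pi> (Suc t) \<omega>) - bregman_prod N psi g p (\<pi> t \<omega>)
         + bregman_prod N psi g (\<pi> (Suc t) \<omega>) (\<pi> t \<omega>)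
       \<le> (1 / (kappa * real t + 2 * theta)) *
            (theta * bregman_prod N psi g (\<pi> (Suc t) \<omega>) (\<pi> t \<omega>)
             - kappa * bregman_prod N psi g p (\<pi> t \<omega>))
         + (1 / (kappa * real t + 2 * theta)) *
            (\<Sum>i<N. inner (\<xi> t \<omega> i) (\<pi> (Suc t) \<omega> i - p i))"
  shows "\<forall>t. (\<integral>\<^sup>+ \<omega>. ennreal (bregman_prod N psi g p (\<pi> (Suc t) \<omega>)) \<partial>M)
           \<le> ennreal ((2 * theta - kappa) / (kappa * real t + 2 * theta) * bregman_prod N psi g p pi0
               + real N * C\<^sup>2 / (rho * (kappa * real t + 2 * theta))
                 * (1 / kappa * ln (kappa / (2 * theta) * real t + 1) + 1 / (2 * theta)))"
proof -
  interpret prob_space M by (rule M)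
  define a where "a = (\<lambda>t::nat. kappa * real t + 2 * theta)"
  define eta where "eta = (\<lambda>t::nat. 1 / a t)"
  define D where "D = (\<lambda>t \<omega>. bregman_prod N psi g p (\<pi> t \<omega>))"
  define Z where "Z = (\<lambda>t \<omega>. (eta t)\<^sup>2 * (\<Sum>i<N. (norm (\<xi> t \<omega> i))\<^sup>2) / rho + eta t * (\<Sum>i<N. inner (\<xi> t \<omega> i) (\<pi> t \<omega> i - p i)))"
  define c where "c = (\<lambda>t. 1 - kappa / (kappa * real t + 2 * theta))"
  define D0 where "D0 = bregman_prod N psi g p pi0"
  define W where "W = Wseq D0 c Z"
  have apos: "\<And>t. a t > 0" unfolding a_def using kappa theta by (smt (verit) mult_nonneg_nonneg of_nat_0_le_iff)
  have ak: "\<And>t. kappa \<le> a t" unfolding a_def using kappa theta by (smt (verit) mult_nonneg_nonneg of_nat_0_le_iff)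
  have ath: "\<And>t. 2 * theta \<le> a t" unfolding a_def using kappa theta by (smt (verit) mult_nonneg_nonneg of_nat_0_le_iff)
  have eta_pos: "\<And>t. eta t > 0" using apos by (simp add: eta_def)
  have eta_th: "\<And>t. eta t * theta \<le> 1/2"
  proof -
    fix t
    have "theta / a t \<le> 1/2" using ath[of t] apos[of t] theta kappa by (simp add: divide_le_eq)
    then show "eta t * theta \<le> 1/2" by (simp add: eta_def)
  qed
  have c_eq: "\<And>t. c t = 1 - eta t * kappa" by (simp add: c_def eta_def a_def)
  have c_nn: "\<And>t. c t \<ge> 0"
  proof -
    fix t
    have "kappa / a t \<le> 1" using ak[of t] apos[of t] by simp
    then show "c t \<ge> 0" by (simp add: c_def a_def)
  qed
  have breg_lb: "rho / 2 * (norm (x - y))\<^sup>2 \<le> bregman (psi i) (g i) x y"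
    if i: "i < N" and x: "x \<in> X i" and y: "y \<in> X i" for i x y
  proof -
    have cv: "convex (X i)" using X[OF i] by blast
    show ?thesis unfolding bregman_def by (rule bregman_strong[OF cv x y grad[OF i y] sconv[OF i]])
  qed
  have breg_nn: "0 \<le> bregman (psi i) (g i) x y"
    if i: "i < N" and x: "x \<in> X i" and y: "y \<in> X i" for i x y
    using rho by (intro order_trans[OF _ breg_lb[OF i x y]]) simp
  have D_nn: "0 \<le> D t \<omega>" if w: "\<omega> \<in> space M" for t \<omega>
    unfolding D_def bregman_prod_def
  proof (rule sum_nonneg)
    fix i assume "i \<in> {..<N}"
    then have i: "i < N" by simp
    show "0 \<le> bregman (psi i) (g i) (p i) (\<pi> t \<omega> i)" by (rule breg_nn[OF i p[OF i] pi_in[OF w i]])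
  qed
  have onestep: "D (Suc t) \<omega> \<le> c t * D t \<omega> + Z t \<omega>"
    if w: "\<omega> \<in> space M" and st: "bregman_prod N psi g p (\<pi> (Suc t) \<omega>) - bregman_prod N psi g p (\<pi> t \<omega>)
         + bregman_prod N psi g (\<pi> (Suc t) \<omega>) (\<pi> t \<omega>)
       \<le> (1 / (kappa * real t + 2 * theta)) *
            (theta * bregman_prod N psi g (\<pi> (Suc t) \<omega>) (\<pi> t \<omega>)
             - kappa * bregman_prod N psi g p (\<pi> t \<omega>))
         + (1 / (kappa * real t + 2 * theta)) *
            (\<Sum>i<N. inner (\<xi> t \<omega> i) (\<pi> (Suc t) \<omega> i - p i))" for t \<omega>
  proof -
    define B where "B = bregman_prod N psi g (\<pi> (Suc t) \<omega>) (\<pi> t \<omega>)"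
    define S1 where "S1 = (\<Sum>i<N. inner (\<xi> t \<omega> i) (\<pi> (Suc t) \<omega> i - \<pi> t \<omega> i))"
    define S2 where "S2 = (\<Sum>i<N. inner (\<xi> t \<omega> i) (\<pi> t \<omega> i - p i))"
    define A where "A = (\<Sum>i<N. rho / 4 * (norm (\<pi> (Suc t) \<omega> i - \<pi> t \<omega> i))\<^sup>2)"
    define Q where "Q = (\<Sum>i<N. (eta t)\<^sup>2 * (norm (\<xi> t \<omega> i))\<^sup>2 / rho)"
    have S: "(\<Sum>i<N. inner (\<xi> t \<omega> i) (\<pi> (Suc t) \<omega> i - p i)) = S1 + S2"
    proof -
      have "(\<Sum>i<N. inner (\<xi> t \<omega> i) (\<pi> (Suc t) \<omega> i - p i))
          = (\<Sum>i<N. inner (\<xi> t \<omega> i) (\<pi> (Suc t) \<omega> i - \<pi> t \<omega> i) + inner (\<xi> t \<omega> i) (\<pi> t \<omega> i - p i))"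
        by (intro sum.cong refl) (simp add: inner_diff_right)
      then show ?thesis by (simp add: S1_def S2_def sum.distrib)
    qed
    have st': "D (Suc t) \<omega> - D t \<omega> + B \<le> eta t * (theta * B - kappa * D t \<omega>) + eta t * (S1 + S2)"
      using st unfolding D_def B_def eta_def a_def S by simp
    have f1: "eta t * S1 \<le> A + Q"
    proof -
      have "eta t * S1 = (\<Sum>i<N. eta t * inner (\<xi> t \<omega> i) (\<pi> (Suc t) \<omega> i - \<pi> t \<omega> i))"
        by (simp add: S1_def sum_distrib_left)
      also have "\<dots> \<le> (\<Sum>i<N. rho / 4 * (norm (\<pi> (Suc t) \<omega> i - \<pi> t \<omega> i))\<^sup>2 + (eta t)\<^sup>2 * (norm (\<xi> t \<omega> i))\<^sup>2 / rho)"
      proof (rule sum_mono)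
        fix i
        show "eta t * inner (\<xi> t \<omega> i) (\<pi> (Suc t) \<omega> i - \<pi> t \<omega> i) \<le> rho / 4 * (norm (\<pi> (Suc t) \<omega> i - \<pi> t \<omega> i))\<^sup>2 + (eta t)\<^sup>2 * (norm (\<xi> t \<omega> i))\<^sup>2 / rho"
          using young_aux[OF rho less_imp_le[OF eta_pos[of t]], of "\<xi> t \<omega> i" "\<pi> (Suc t) \<omega> i - \<pi> t \<omega> i"] by linarith
      qed
      also have "\<dots> = A + Q" by (simp add: A_def Q_def sum.distrib)
      finally show ?thesis .
    qed
    have f2: "2 * A \<le> B"
    proof -
      have "2 * A = (\<Sum>i<N. rho / 2 * (norm (\<pi> (Suc t) \<omega> i - \<pi> t \<omega> i))\<^sup>2)"
        by (simp add: A_def sum_distrib_left)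
      also have "\<dots> \<le> B" unfolding B_def bregman_prod_def
      proof (rule sum_mono)
        fix i assume "i \<in> {..<N}"
        then have i: "i < N" by simp
        show "rho / 2 * (norm (\<pi> (Suc t) \<omega> i - \<pi> t \<omega> i))\<^sup>2 \<le> bregman (psi i) (g i) (\<pi> (Suc t) \<omega> i) (\<pi> t \<omega> i)"
          by (rule breg_lb[OF i pi_in[OF w i] pi_in[OF w i]])
      qed
      finally show ?thesis .
    qed
    have B0: "0 \<le> B" unfolding B_def bregman_prod_def
    proof (rule sum_nonneg)
      fix i assume "i \<in> {..<N}"
      then have i: "i < N" by simp
      show "0 \<le> bregman (psi i) (g i) (\<pi> (Suc t) \<omega> i) (\<pi> t \<omega> i)"
        by (rule breg_nn[OF i pi_in[OF w i] pi_in[OF w i]])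
    qed
    have "D (Suc t) \<omega> \<le> (1 - eta t * kappa) * D t \<omega> + Q + eta t * S2"
      by (rule onestep_aux[OF st' f1 f2 eta_th[of t] B0])
    moreover have "Q = (eta t)\<^sup>2 * (\<Sum>i<N. (norm (\<xi> t \<omega> i))\<^sup>2) / rho"
      by (simp add: Q_def sum_distrib_left sum_divide_distrib)
    ultimately show ?thesis by (simp add: Z_def c_eq S2_def)
  qed
  have AEle: "AE \<omega> in M. D t \<omega> \<le> W t \<omega>" for t
  proof (induction t)
    case 0
    show ?case by (rule AE_I2) (simp add: W_def D_def D0_def pi0)
  next
    case (Suc t)
    from Suc step[of t] AE_space show ?case
    proof eventually_elim
      case (elim \<omega>)
      have "D (Suc t) \<omega> \<le> c t * D t \<omega> + Z t \<omega>" using onestep[OF elim(3) elim(2)] .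
      also have "\<dots> \<le> c t * W t \<omega> + Z t \<omega>" using elim(1) c_nn[of t] by (simp add: mult_left_mono)
      finally show ?case by (simp add: W_def)
    qed
  qed
  have sub: "\<And>t. subalgebra M (F t)" by (rule subalg)
  have sq: "\<And>t i. i < N \<Longrightarrow> integrable M (\<lambda>\<omega>. (norm (\<xi> t \<omega> i))\<^sup>2) \<and> (\<integral>\<omega>. (norm (\<xi> t \<omega> i))\<^sup>2 \<partial>M) \<le> C\<^sup>2"
  proof -
    fix t i assume i: "i < N"
    show "integrable M (\<lambda>\<omega>. (norm (\<xi> t \<omega> i))\<^sup>2) \<and> (\<integral>\<omega>. (norm (\<xi> t \<omega> i))\<^sup>2 \<partial>M) \<le> C\<^sup>2"
      using xi_sq[OF M subalg xi_meas[OF i] xi_var[OF i]] by (rule conjI)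
  qed
  have zr: "integrable M (\<lambda>\<omega>. inner (\<xi> t \<omega> i) (\<pi> t \<omega> i - p i)) \<and> (\<integral>\<omega>. inner (\<xi> t \<omega> i) (\<pi> t \<omega> i - p i) \<partial>M) = 0"
    if i: "i < N" for t i
  proof -
    obtain K where K: "\<forall>x\<in>X i. norm x \<le> K" using compact_imp_bounded X[OF i] bounded_iff by metis
    have [measurable]: "(\<lambda>\<omega>. \<pi> t \<omega> i) \<in> borel_measurable (F t)" by (rule pi_adapted[OF i])
    have hm: "(\<lambda>\<omega>. \<pi> t \<omega> i - p i) \<in> borel_measurable (F t)" by measurable
    have hb: "\<And>\<omega>. \<omega> \<in> space M \<Longrightarrow> norm (\<pi> t \<omega> i - p i) \<le> K + K"
    proof -
      fix \<omega> assume "\<omega> \<in> space M"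
      then have "norm (\<pi> t \<omega> i) \<le> K" "norm (p i) \<le> K" using K pi_in[OF _ i] p[OF i] by blast+
      then show "norm (\<pi> t \<omega> i - p i) \<le> K + K" using norm_triangle_ineq4[of "\<pi> t \<omega> i" "p i"] by linarith
    qed
    show ?thesis using xi_zero[OF M subalg xi_meas[OF i] sq[OF i, THEN conjunct1] xi_mean[OF i] hm hb] by (rule conjI)
  qed
  have intZ: "integrable M (Z t)" for t
    unfolding Z_def
  proof (intro Bochner_Integration.integrable_add integrable_mult_right integrable_divide
        Bochner_Integration.integrable_sum)
    fix i assume "i \<in> {..<N}"
    then have i: "i < N" by simp
    show "integrable M (\<lambda>\<omega>. (norm (\<xi> t \<omega> i))\<^sup>2)" using sq[OF i] by (rule conjunct1)
    show "integrable M (\<lambda>\<omega>. inner (\<xi> t \<omega> i) (\<pi> t \<omega> i - p i))" using zr[OF i] by (rule conjunct1)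
  qed
  have intZle: "(\<integral>\<omega>. Z t \<omega> \<partial>M) \<le> (real N * C\<^sup>2 / rho) / (kappa * real t + 2 * theta)\<^sup>2" for t
  proof -
    have i1: "integrable M (\<lambda>\<omega>. \<Sum>i<N. (norm (\<xi> t \<omega> i))\<^sup>2)"
      by (intro Bochner_Integration.integrable_sum) (use sq in blast)
    have i2: "integrable M (\<lambda>\<omega>. \<Sum>i<N. inner (\<xi> t \<omega> i) (\<pi> t \<omega> i - p i))"
      by (intro Bochner_Integration.integrable_sum) (use zr in blast)
    have e1: "(\<integral>\<omega>. (\<Sum>i<N. (norm (\<xi> t \<omega> i))\<^sup>2) \<partial>M) \<le> real N * C\<^sup>2"
    proof -
      have "(\<integral>\<omega>. (\<Sum>i<N. (norm (\<xi> t \<omega> i))\<^sup>2) \<partial>M) = (\<Sum>i<N. (\<integral>\<omega>. (norm (\<xi> t \<omega> i))\<^sup>2 \<partial>M))"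
        by (rule Bochner_Integration.integral_sum) (use sq in blast)
      also have "\<dots> \<le> (\<Sum>i<N. C\<^sup>2)" by (intro sum_mono) (use sq in blast)
      finally show ?thesis by simp
    qed
    have e2: "(\<integral>\<omega>. (\<Sum>i<N. inner (\<xi> t \<omega> i) (\<pi> t \<omega> i - p i)) \<partial>M) = 0"
    proof -
      have "(\<integral>\<omega>. (\<Sum>i<N. inner (\<xi> t \<omega> i) (\<pi> t \<omega> i - p i)) \<partial>M) = (\<Sum>i<N. (\<integral>\<omega>. inner (\<xi> t \<omega> i) (\<pi> t \<omega> i - p i) \<partial>M))"
        by (rule Bochner_Integration.integral_sum) (use zr in blast)
      also have "\<dots> = 0" by (rule sum.neutral) (use zr in blast)
      finally show ?thesis .
    qed
    have "(\<integral>\<omega>. Z t \<omega> \<partial>M) = (eta t)\<^sup>2 * (\<integral>\<omega>. (\<Sum>i<N. (norm (\<xi> t \<omega> i))\<^sup>2) \<partial>M) / rho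
          + eta t * (\<integral>\<omega>. (\<Sum>i<N. inner (\<xi> t \<omega> i) (\<pi> t \<omega> i - p i)) \<partial>M)"
      unfolding Z_def using i1 i2 by (simp add: Bochner_Integration.integral_add)
    also have "\<dots> \<le> (eta t)\<^sup>2 * (real N * C\<^sup>2) / rho" using e1 e2 rho
      by (simp add: divide_right_mono mult_left_mono)
    also have "\<dots> = (real N * C\<^sup>2 / rho) / (kappa * real t + 2 * theta)\<^sup>2"
      by (simp add: eta_def a_def power_divide)
    finally show ?thesis .
  qed
  have intW: "integrable M (W t)" for t
    by (induction t) (simp_all add: W_def intZ)
  have eW: "(\<integral>\<omega>. W (Suc s) \<omega> \<partial>M) \<le> (1 - kappa / (kappa * real s + 2 * theta)) * (\<integral>\<omega>. W s \<omega> \<partial>M)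
            + (real N * C\<^sup>2 / rho) / (kappa * real s + 2 * theta)\<^sup>2" for s
  proof -
    have "(\<integral>\<omega>. W (Suc s) \<omega> \<partial>M) = c s * (\<integral>\<omega>. W s \<omega> \<partial>M) + (\<integral>\<omega>. Z s \<omega> \<partial>M)"
      using intW[of s] intZ[of s] by (simp add: W_def Bochner_Integration.integral_add)
    then show ?thesis using intZle[of s] by (simp add: c_def)
  qed
  have e0: "(\<integral>\<omega>. W 0 \<omega> \<partial>M) = D0" by (simp add: W_def prob_space)
  have K0: "real N * C\<^sup>2 / rho \<ge> 0" using rho by simp
  show ?thesis
  proof
    fix t
    have "(\<integral>\<^sup>+ \<omega>. ennreal (bregman_prod N psi g p (\<pi> (Suc t) \<omega>)) \<partial>M) \<le> (\<integral>\<^sup>+ \<omega>. ennreal (W (Suc t) \<omega>) \<partial>M)"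
      using AEle[of "Suc t"] by (intro nn_integral_mono_AE) (auto simp: D_def intro: ennreal_leI)
    also have "\<dots> = ennreal (\<integral>\<omega>. W (Suc t) \<omega> \<partial>M)"
    proof (rule nn_integral_eq_integral[OF intW])
      show "AE \<omega> in M. 0 \<le> W (Suc t) \<omega>" using AEle[of "Suc t"] AE_space
    proof eventually_elim
      case (elim \<omega>)
      then show ?case using D_nn[OF elim(2), of "Suc t"] by linarith
    qed
    qed
    also have "\<dots> \<le> ennreal ((2 * theta - kappa) / (kappa * real t + 2 * theta) * D0
           + (real N * C\<^sup>2 / rho) / (kappa * real t + 2 * theta) * (1 / kappa * ln (kappa / (2 * theta) * real t + 1) + 1 / (2 * theta)))"
      by (intro ennreal_leI recursion_bound[OF kappa theta K0 e0 eW])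
    finally show "(\<integral>\<^sup>+ \<omega>. ennreal (bregman_prod N psi g p (\<pi> (Suc t) \<omega>)) \<partial>M)
           \<le> ennreal ((2 * theta - kappa) / (kappa * real t + 2 * theta) * bregman_prod N psi g p pi0
               + real N * C\<^sup>2 / (rho * (kappa * real t + 2 * theta))
                 * (1 / kappa * ln (kappa / (2 * theta) * real t + 1) + 1 / (2 * theta)))"
      by (simp add: D0_def)
  qed
qed

end
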